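(* Let $m\ge3$, $\theta\in(0,1]$, and let $\hat P$ be the expected normalized profile. Candidate $1$ wins under the Two-Round System in $\hat P$. If $\theta>\frac{m-3}{5m-3}$, the Two-Round System is not CM in $\hat P$ (and not CM in any continuous profile of some neighborhood of $\hat P$). If $\theta<\frac{m-3}{5m-3}$, it is CM in $\hat P$; more precisely, the profile $Q$ obtained from $\hat P$ by reassigning the total weight $\frac{1-\theta}{2}$ of rankings preferring $2$ to $1$ so that a fraction $\frac{2(1-2\theta)}{3(1-\theta)}$ of it goes to ranking $2\succ3\succ\cdots\succ m\succ1$ and a fraction $\frac{1+\theta}{3(1-\theta)}$ goes to ranking $3\succ4\succ\cdots\succ m\succ1\succ2$ has candidate $2$ as Two-Round winner.
   Context: A ranking is a strict total order on $\{1,\dots,m\}$. A continuous profile consists of the candidate set, total weight $w(P)>0$ and weights $w(p,P)\ge 0$ for each ranking $p$ summing to $w(P)$; profiles are identified with weight vectors in $\mathbb R^{m!}$. For a candidate set $K$, $P_K$ restricts each ranking to $K$ (aggregating weights). Plurality score $s_{\mathrm{Plu}}(c,P)$: total weight of rankings placing $c$ first. Two-Round System: the two candidates with highest Plurality scores in $P$ form $K$, and the winner is the one with higher Plurality score in $P_K$; ties broken by an arbitrary fixed rule. CM (continuous): a rule $f$ is CM in $P$ if there is a continuous profile $Q$ with the same candidates and total weight, $f(Q)\ne f(P)$, and every ranking $p$ with $w(p,Q)<w(p,P)$ prefers $f(Q)$ to $f(P)$. Expected normalized profile $\hat P$: total weight $1$, weight $\theta+\frac{1-\theta}{m!}$ on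 $1\succ\cdots\succ m$ and $\frac{1-\theta}{m!}$ on each other ranking. *)

theory Defs
  imports Complex_Main "HOL-Combinatorics.Multiset_Permutations"
begin

text \<open>Candidates are 1..m. A ranking is a list enumerating {1..m} without
repetition, best candidate first.\<close>

definition rankings :: "nat \<Rightarrow> nat list set" where
  "rankings m = permutations_of_set {1..m}"

definition prefers :: "nat list \<Rightarrow> nat \<Rightarrow> nat \<Rightarrow> bool" where
  "prefers p a b \<longleftrightarrow> (\<exists>i j. i < j \<and> j < length p \<and> p ! i = a \<and> p ! j = b)"

definition total :: "nat \<Rightarrow> (nat list \<Rightarrow> real) \<Rightarrow> real" where
  "total m P = (\<Sum>p\<in>rankings m. P p)"

definition is_profile :: "nat \<Rightarrow> (nat list \<Rightarrow> real) \<Rightarrow> bool" where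
  "is_profile m P \<longleftrightarrow> (\<forall>p. 0 \<le> P p) \<and> (\<forall>p. p \<notin> rankings m \<longrightarrow> P p = 0) \<and> total m P > 0"

definition restr :: "nat \<Rightarrow> nat set \<Rightarrow> (nat list \<Rightarrow> real) \<Rightarrow> nat list \<Rightarrow> real" where
  "restr m K P q = (\<Sum>p\<in>{p\<in>rankings m. filter (\<lambda>x. x \<in> K) p = q}. P p)"

definition plu :: "nat list set \<Rightarrow> (nat list \<Rightarrow> real) \<Rightarrow> nat \<Rightarrow> real" where
  "plu R P c = (\<Sum>p\<in>{p\<in>R. hd p = c}. P p)"

text \<open>Fixed tie-breaking rule: a strict total order on candidates, given as a ranking tb;
among equal scores, the candidate ranked earlier in tb is preferred.
beats s tb c d: c is ahead of d w.r.t. score s with ties broken by tb.\<close>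
definition beats :: "(nat \<Rightarrow> real) \<Rightarrow> nat list \<Rightarrow> nat \<Rightarrow> nat \<Rightarrow> bool" where
  "beats s tb c d \<longleftrightarrow> s c > s d \<or> (s c = s d \<and> prefers tb c d)"

definition first_cand :: "nat \<Rightarrow> nat list \<Rightarrow> (nat list \<Rightarrow> real) \<Rightarrow> nat" where
  "first_cand m tb P = (THE c. c \<in> {1..m} \<and>
      (\<forall>d\<in>{1..m}. d \<noteq> c \<longrightarrow> beats (plu (rankings m) P) tb c d))"

definition second_cand :: "nat \<Rightarrow> nat list \<Rightarrow> (nat list \<Rightarrow> real) \<Rightarrow> nat" where
  "second_cand m tb P = (THE c. c \<in> {1..m} \<and> c \<noteq> first_cand m tb P \<and>
      (\<forall>d\<in>{1..m}. d \<noteq> c \<and> d \<noteq> first_cand m tb P \<longrightarrow> beats (plu (rankings m) P) tb c d))"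

definition trs :: "nat \<Rightarrow> nat list \<Rightarrow> (nat list \<Rightarrow> real) \<Rightarrow> nat" where
  "trs m tb P = (let a = first_cand m tb P; b = second_cand m tb P; K = {a, b};
                     s = plu (permutations_of_set K) (restr m K P)
                 in if beats s tb a b then a else b)"

definition CM :: "nat \<Rightarrow> nat list \<Rightarrow> (nat list \<Rightarrow> real) \<Rightarrow> bool" where
  "CM m tb P \<longleftrightarrow> (\<exists>Q. is_profile m Q \<and> total m Q = total m P \<and> trs m tb Q \<noteq> trs m tb P \<and>
      (\<forall>p\<in>rankings m. Q p < P p \<longrightarrow> prefers p (trs m tb Q) (trs m tb P)))"

definition hatP :: "nat \<Rightarrow> real \<Rightarrow> nat list \<Rightarrow> real" where
  "hatP m \<theta> p = (if p \<in> rankings m then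
      (if p = [1..<m+1] then \<theta> + (1 - \<theta>) / fact m else (1 - \<theta>) / fact m) else 0)"

definition manipQ :: "nat \<Rightarrow> real \<Rightarrow> nat list \<Rightarrow> real" where
  "manipQ m \<theta> p =
     (if prefers p 2 1 then 0 else hatP m \<theta> p)
     + (if p = 2 # [3..<m+1] @ [1] then (1 - \<theta>) / 2 * (2 * (1 - 2 * \<theta>) / (3 * (1 - \<theta>))) else 0)
     + (if p = [3..<m+1] @ [1, 2] then (1 - \<theta>) / 2 * ((1 + \<theta>) / (3 * (1 - \<theta>))) else 0)"

end

theory Submission
  imports Defs
begin

lemma prefers_Nil[simp]: "\<not> prefers [] a b"
  by (auto simp: prefers_def)

lemma prefers_Cons: "prefers (x # xs) a b \<longleftrightarrow> (x = a \<and> b \<in> set xs) \<or> prefers xs a b"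
proof
  assume "prefers (x # xs) a b"
  then obtain i j where ij: "i < j" "j < length (x#xs)" "(x#xs) ! i = a" "(x#xs) ! j = b"
    by (auto simp: prefers_def)
  then obtain j' where j': "j = Suc j'" by (cases j) auto
  show "(x = a \<and> b \<in> set xs) \<or> prefers xs a b"
  proof (cases i)
    case 0 then show ?thesis using ij j' by auto
  next
    case (Suc i') then show ?thesis using ij j' unfolding prefers_def
      by (intro disjI2 exI[of _ i'] exI[of _ j']) auto
  qed
next
  assume "(x = a \<and> b \<in> set xs) \<or> prefers xs a b"
  then show "prefers (x # xs) a b"
  proof
    assume h: "x = a \<and> b \<in> set xs"
    then obtain j where "j < length xs" "xs ! j = b" by (auto simp: in_set_conv_nth)
    then show ?thesis using h unfolding prefers_def by (intro exI[of _ 0] exI[of _ "Suc j"]) auto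
  next
    assume "prefers xs a b"
    then obtain i j where "i < j" "j < length xs" "xs ! i = a" "xs ! j = b" by (auto simp: prefers_def)
    then show ?thesis unfolding prefers_def by (intro exI[of _ "Suc i"] exI[of _ "Suc j"]) auto
  qed
qed

lemma prefers_set: "prefers p a b \<Longrightarrow> a \<in> set p \<and> b \<in> set p"
  by (induction p) (auto simp: prefers_Cons)

lemma prefers_append: "prefers ys a b \<Longrightarrow> prefers (xs @ ys) a b"
  by (induction xs) (auto simp: prefers_Cons)

lemma prefers_nth:
  assumes "distinct p" "i < length p" "j < length p"
  shows "prefers p (p!i) (p!j) \<longleftrightarrow> i < j"
proof
  assume "prefers p (p!i) (p!j)"
  then obtain k l where "k < l" "l < length p" "p ! k = p!i" "p ! l = p!j" by (auto simp: prefers_def)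
  then show "i < j" using assms by (metis nth_eq_iff_index_eq order.strict_trans)
next
  assume "i < j" then show "prefers p (p!i) (p!j)" using assms unfolding prefers_def by blast
qed

lemma prefers_asym: "distinct p \<Longrightarrow> prefers p a b \<Longrightarrow> \<not> prefers p b a"
proof
  assume "distinct p" "prefers p a b" "prefers p b a"
  then obtain i j k l where "i < j" "j < length p" "p ! i = a" "p ! j = b"
     "k < l" "l < length p" "p ! k = b" "p ! l = a" by (auto simp: prefers_def)
  then show False using \<open>distinct p\<close> by (metis nth_eq_iff_index_eq order.strict_trans order.asym)
qed

lemma prefers_total: "distinct p \<Longrightarrow> a \<in> set p \<Longrightarrow> b \<in> set p \<Longrightarrow> a \<noteq> b \<Longrightarrow> prefers p a b \<or> prefers p b a"
proof -
  assume "distinct p" "a \<in> set p" "b \<in> set p" "a \<noteq> b"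
  then obtain i j where "i < length p" "j < length p" "p!i = a" "p!j = b" by (auto simp: in_set_conv_nth)
  then show ?thesis using prefers_nth[OF \<open>distinct p\<close>] \<open>a \<noteq> b\<close> by (metis linorder_neqE)
qed

lemma prefers_map: "inj f \<Longrightarrow> prefers (map f p) (f a) (f b) \<longleftrightarrow> prefers p a b"
  by (induction p) (auto simp: prefers_Cons inj_eq)

lemma prefers_hd: "distinct p \<Longrightarrow> p \<noteq> [] \<Longrightarrow> b \<in> set p \<Longrightarrow> b \<noteq> hd p \<Longrightarrow> prefers p (hd p) b"
  by (cases p) (auto simp: prefers_Cons)

lemma hd_filter_pair:
  assumes "distinct p" "a \<in> set p" "b \<in> set p" "a \<noteq> b"
  shows "hd (filter (\<lambda>x. x \<in> {a,b}) p) = a \<longleftrightarrow> prefers p a b"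
  using assms
proof (induction p)
  case Nil then show ?case by simp
next
  case (Cons x xs)
  show ?case
  proof (cases "x = a")
    case True then show ?thesis using Cons by (auto simp: prefers_Cons)
  next
    case False
    show ?thesis
    proof (cases "x = b")
      case True
      then show ?thesis using Cons False prefers_set[of xs a b] by (auto simp: prefers_Cons)
    next
      case False2: False
      then show ?thesis using Cons False by (auto simp: prefers_Cons)
    qed
  qed
qed


definition sw :: "nat \<Rightarrow> nat \<Rightarrow> nat \<Rightarrow> nat" where
  "sw a b x = (if x = a then b else if x = b then a else x)"

lemma sw_sw[simp]: "sw a b (sw a b x) = x" by (auto simp: sw_def)
lemma inj_sw: "inj (sw a b)" by (metis injI sw_sw)
lemma sw_simps[simp]: "sw a b a = b" "sw a b b = a" "x \<noteq> a \<Longrightarrow> x \<noteq> b \<Longrightarrow> sw a b x = x"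
  by (auto simp: sw_def)
lemma sw_eq_iff: "sw a b x = b \<longleftrightarrow> x = a" "sw a b x = a \<longleftrightarrow> x = b"
  "y \<noteq> a \<Longrightarrow> y \<noteq> b \<Longrightarrow> sw a b x = y \<longleftrightarrow> x = y"
  by (auto simp: sw_def)

lemma rank_mem: "p \<in> rankings m \<longleftrightarrow> distinct p \<and> set p = {1..m}"
  by (auto simp: rankings_def permutations_of_set_def)

lemma rank_finite[simp]: "finite (rankings m)" by (simp add: rankings_def)
lemma rank_card: "card (rankings m) = fact m" by (simp add: rankings_def)

lemma rank_ne: "p \<in> rankings m \<Longrightarrow> m \<ge> 1 \<Longrightarrow> p \<noteq> []"
  by (auto simp: rank_mem)

lemma hd_rank: "p \<in> rankings m \<Longrightarrow> m \<ge> 1 \<Longrightarrow> hd p \<in> {1..m}"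
  by (metis hd_in_set rank_mem rank_ne)

lemma sw_image: "a \<in> A \<Longrightarrow> b \<in> A \<Longrightarrow> sw a b ` A = A"
  by (auto simp: sw_def)

lemma map_sw_rank: "a \<in> {1..m} \<Longrightarrow> b \<in> {1..m} \<Longrightarrow> p \<in> rankings m \<Longrightarrow> map (sw a b) p \<in> rankings m"
  using sw_image[of a "{1..m}" b] inj_on_subset[OF inj_sw, of "set p" a b]
  by (auto simp: rank_mem distinct_map simp del: sw_simps)

lemma rank_total: "p \<in> rankings m \<Longrightarrow> a \<in> {1..m} \<Longrightarrow> b \<in> {1..m} \<Longrightarrow> a \<noteq> b \<Longrightarrow> prefers p a b \<or> prefers p b a"
  using prefers_total by (auto simp: rank_mem)

lemma rank_asym: "p \<in> rankings m \<Longrightarrow> prefers p a b \<Longrightarrow> \<not> prefers p b a"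
  using prefers_asym by (auto simp: rank_mem)

lemma prefers_sw: "prefers (map (sw a b) p) x y \<longleftrightarrow> prefers p (sw a b x) (sw a b y)"
  by (metis prefers_map[OF inj_sw] sw_sw)

lemma card_swap:
  assumes "a \<in> {1..m}" "b \<in> {1..m}"
  shows "card {p\<in>rankings m. \<Phi> p} = card {p\<in>rankings m. \<Phi> (map (sw a b) p)}"
proof -
  have "{p\<in>rankings m. \<Phi> p} = map (sw a b) ` {p\<in>rankings m. \<Phi> (map (sw a b) p)}"
  proof (intro set_eqI iffI)
    fix p assume "p \<in> {p\<in>rankings m. \<Phi> p}"
    then have "map (sw a b) p \<in> {p\<in>rankings m. \<Phi> (map (sw a b) p)}"
      using map_sw_rank[OF assms] by (simp add: comp_def)
    moreover have "p = map (sw a b) (map (sw a b) p)" by (simp add: comp_def)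
    ultimately show "p \<in> map (sw a b) ` {p\<in>rankings m. \<Phi> (map (sw a b) p)}" by blast
  next
    fix p assume "p \<in> map (sw a b) ` {p\<in>rankings m. \<Phi> (map (sw a b) p)}"
    then show "p \<in> {p\<in>rankings m. \<Phi> p}" using map_sw_rank[OF assms] by auto
  qed
  moreover have "inj_on (map (sw a b)) X" for X
    by (meson inj_mapI inj_on_subset inj_sw subset_UNIV)
  ultimately show ?thesis by (simp add: card_image)
qed

lemma T1: "d \<in> {1..m} \<Longrightarrow> card {p\<in>rankings m. hd p = d} = card {p\<in>rankings m. hd (map (sw 1 d) p) = d}"
  apply (rule card_swap[of 1 m d "\<lambda>p. hd p = d"]) 
  apply auto done
lemma T2: "1 \<le> m \<Longrightarrow> {p\<in>rankings m. hd (map (sw 1 d) p) = d} = {p\<in>rankings m. hd p = 1}"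
proof (intro Collect_cong conj_cong refl)
  fix p assume "p \<in> rankings m" "1 \<le> m"
  then have "p \<noteq> []" using rank_ne by blast
  then show "(hd (map (sw 1 d) p) = d) = (hd p = 1)" by (simp add: hd_map sw_eq_iff(1))
qed

lemma T4: "1 \<le> m \<Longrightarrow> card (rankings m) = (\<Sum>d\<in>{1..m}. card {p\<in>rankings m. hd p = d})"
proof -
  assume m1: "1 \<le> m"
  have "card (rankings m) = (\<Sum>p\<in>rankings m. 1)" by simp
  also have "\<dots> = (\<Sum>d\<in>{1..m}. \<Sum>p\<in>{p. p \<in> rankings m \<and> hd p = d}. 1)"
    by (rule sum.group[symmetric]) (use hd_rank m1 in auto)
  finally show ?thesis by simp
qed

lemma T3: "d \<in> {1..m} \<Longrightarrow> card {p\<in>rankings m. hd p = d} = card {p\<in>rankings m. hd p = 1}"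
proof -
  assume d: "d \<in> {1..m}"
  then have "1 \<le> m" by auto
  show ?thesis by (rule trans[OF T1[OF d] arg_cong[where f=card, OF T2[OF \<open>1 \<le> m\<close>]]])
qed

lemma card_hd:
  assumes "c \<in> {1..m}"
  shows "m * card {p\<in>rankings m. hd p = c} = fact m"
proof -
  have m1: "1 \<le> m" using assms by auto
  have "fact m = (\<Sum>d\<in>{1..m}. card {p\<in>rankings m. hd p = d})" using T4[OF m1] rank_card by simp
  also have "\<dots> = (\<Sum>d\<in>{1..m}. card {p\<in>rankings m. hd p = 1})"
    by (rule sum.cong[OF refl], rule T3)
  finally show ?thesis using T3[OF assms] by simp
qed


lemma card_pref:
  assumes "a \<in> {1..m}" "b \<in> {1..m}" "a \<noteq> b"
  shows "2 * card {p\<in>rankings m. prefers p a b} = fact m"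
proof -
  have e1: "card {p\<in>rankings m. prefers p a b} = card {p\<in>rankings m. prefers p b a}"
    using card_swap[OF assms(1,2), of "\<lambda>p. prefers p a b"] by (simp add: prefers_sw)
  have "rankings m = {p\<in>rankings m. prefers p a b} \<union> {p\<in>rankings m. prefers p b a}"
    using rank_total[of _ m a b] assms by auto
  moreover have "{p\<in>rankings m. prefers p a b} \<inter> {p\<in>rankings m. prefers p b a} = {}"
    using prefers_asym by (auto simp: rank_mem)
  ultimately have "card (rankings m) = card {p\<in>rankings m. prefers p a b} + card {p\<in>rankings m. prefers p b a}"
    by (metis (no_types, lifting) card_Un_disjoint finite_Un rank_finite)
  then show ?thesis using e1 rank_card by simp
qed

lemma card_hd_pref:
  assumes "a \<in> {1..m}" "b \<in> {1..m}" "x \<in> {1..m}" "a \<noteq> b" "x \<noteq> a" "x \<noteq> b"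
  shows "2 * card {p\<in>rankings m. hd p = x \<and> prefers p a b} = card {p\<in>rankings m. hd p = x}"
proof -
  have m1: "m \<ge> 1" using assms by auto
  have "card {p\<in>rankings m. hd p = x \<and> prefers p a b} = card {p\<in>rankings m. hd (map (sw a b) p) = x \<and> prefers (map (sw a b) p) a b}"
    by (rule card_swap[OF assms(1,2)])
  also have "{p\<in>rankings m. hd (map (sw a b) p) = x \<and> prefers (map (sw a b) p) a b} = {p\<in>rankings m. hd p = x \<and> prefers p b a}"
    using rank_ne[OF _ m1] assms by (auto simp: hd_map sw_eq_iff prefers_sw)
  finally have e1: "card {p\<in>rankings m. hd p = x \<and> prefers p a b} = card {p\<in>rankings m. hd p = x \<and> prefers p b a}" .
  have "{p\<in>rankings m. hd p = x} = {p\<in>rankings m. hd p = x \<and> prefers p a b} \<union> {p\<in>rankings m. hd p = x \<and> prefers p b a}"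
    using rank_total[of _ m a b] assms by auto
  moreover have "{p\<in>rankings m. hd p = x \<and> prefers p a b} \<inter> {p\<in>rankings m. hd p = x \<and> prefers p b a} = {}"
    using prefers_asym by (auto simp: rank_mem)
  ultimately have "card {p\<in>rankings m. hd p = x} = card {p\<in>rankings m. hd p = x \<and> prefers p a b} + card {p\<in>rankings m. hd p = x \<and> prefers p b a}"
    using card_Un_disjoint[of "{p\<in>rankings m. hd p = x \<and> prefers p a b}" "{p\<in>rankings m. hd p = x \<and> prefers p b a}"]
    by simp
  then show ?thesis using e1 by simp
qed

lemma card_last3:
  assumes "a \<in> {1..m}" "b \<in> {1..m}" "c \<in> {1..m}" "a \<noteq> b" "a \<noteq> c" "b \<noteq> c"
  shows "3 * card {p\<in>rankings m. prefers p a b \<and> prefers p c b} = fact m"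
proof -
  define X where "X y z w = {p\<in>rankings m. prefers p y z \<and> prefers p w z}" for y z w
  have fin: "finite (X y z w)" for y z w unfolding X_def by simp
  have e1: "card (X a b c) = card (X a c b)"
    unfolding X_def using card_swap[OF assms(2,3), of "\<lambda>p. prefers p a b \<and> prefers p c b"] assms
    by (simp add: prefers_sw)
  have e2: "card (X a b c) = card (X b a c)"
    unfolding X_def using card_swap[OF assms(1,2), of "\<lambda>p. prefers p a b \<and> prefers p c b"] assms
    by (simp add: prefers_sw)
  have cover: "rankings m = X a b c \<union> X a c b \<union> X b a c"
  proof (intro set_eqI iffI)
    fix p assume p: "p \<in> rankings m"
    then have d: "distinct p" and s: "a \<in> set p" "b \<in> set p" "c \<in> set p" using assms by (auto simp: rank_mem)
    obtain i j k where ijk: "i<length p" "p!i=a" "j<length p" "p!j=b" "k<length p" "p!k=c"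
      using s by (meson in_set_conv_nth)
    then have "i\<noteq>j" "i\<noteq>k" "j\<noteq>k" using assms by auto
    then have "(i<j \<and> k<j) \<or> (i<k \<and> j<k) \<or> (j<i \<and> k<i)" by linarith
    moreover have "prefers p a b \<longleftrightarrow> i<j" using prefers_nth[OF d, of i j] ijk by simp
    moreover have "prefers p c b \<longleftrightarrow> k<j" using prefers_nth[OF d, of k j] ijk by simp
    moreover have "prefers p a c \<longleftrightarrow> i<k" using prefers_nth[OF d, of i k] ijk by simp
    moreover have "prefers p b c \<longleftrightarrow> j<k" using prefers_nth[OF d, of j k] ijk by simp
    moreover have "prefers p b a \<longleftrightarrow> j<i" using prefers_nth[OF d, of j i] ijk by simp
    moreover have "prefers p c a \<longleftrightarrow> k<i" using prefers_nth[OF d, of k i] ijk by simp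
    ultimately show "p \<in> X a b c \<union> X a c b \<union> X b a c"
      unfolding X_def using p by auto
  qed (auto simp: X_def)
  have dis: "X a b c \<inter> X a c b = {}" "(X a b c \<union> X a c b) \<inter> X b a c = {}"
    unfolding X_def using prefers_asym by (auto simp: rank_mem)
  have c1: "card (X a b c \<union> X a c b) = card (X a b c) + card (X a c b)"
    by (rule card_Un_disjoint) (use fin dis in auto)
  have c2: "card ((X a b c \<union> X a c b) \<union> X b a c) = card (X a b c \<union> X a c b) + card (X b a c)"
    by (rule card_Un_disjoint) (use fin dis in auto)
  have "fact m = 3 * card (X a b c)"
    using c1 c2 cover e1 e2 rank_card[of m] by simp
  then show ?thesis unfolding X_def by simp
qed

lemma beats_ge: "beats s tb c d \<Longrightarrow> s c \<ge> s d"
  by (auto simp: beats_def)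

lemma beats_gt: "s c > s d \<Longrightarrow> beats s tb c d"
  by (auto simp: beats_def)

lemma beats_asym: "distinct tb \<Longrightarrow> beats s tb c d \<Longrightarrow> beats s tb d c \<Longrightarrow> False"
  using prefers_asym by (auto simp: beats_def)

lemma beats_max_ex:
  assumes "distinct tb" "finite A" "A \<noteq> {}" "A \<subseteq> set tb"
  shows "\<exists>c\<in>A. \<forall>d\<in>A. d \<noteq> c \<longrightarrow> beats s tb c d"
proof -
  define M where "M = Max (s ` A)"
  define C where "C = {c\<in>A. s c = M}"
  have "M \<in> s ` A" unfolding M_def using assms by simp
  then have Cne: "C \<noteq> {}" unfolding C_def by auto
  have Cfin: "finite C" using assms unfolding C_def by simp
  define i where "i = Min ((\<lambda>c. THE k. k < length tb \<and> tb ! k = c) ` C)"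
  have pos: "\<exists>!k. k < length tb \<and> tb ! k = c" if "c \<in> A" for c
    using that assms distinct_Ex1[of tb c] by auto
  define ps where "ps c = (THE k. k < length tb \<and> tb ! k = c)" for c
  have ps: "ps c < length tb \<and> tb ! ps c = c" if "c \<in> A" for c
    unfolding ps_def using theI'[OF pos[OF that]] .
  have "i \<in> ps ` C" unfolding i_def ps_def using Cne Cfin by simp
  then obtain c where c: "c \<in> C" "ps c = i" by auto
  have imin: "i \<le> ps d" if "d \<in> C" for d unfolding i_def ps_def using that Cfin by simp
  have cA: "c \<in> A" "s c = M" using c unfolding C_def by auto
  show ?thesis
  proof (intro bexI[OF _ cA(1)] ballI impI)
    fix d assume d: "d \<in> A" "d \<noteq> c"
    have "s d \<le> M" unfolding M_def using assms d by simp
    show "beats s tb c d"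
    proof (cases "s d = M")
      case True
      then have "d \<in> C" using d unfolding C_def by simp
      then have "ps c \<le> ps d" using imin c by simp
      moreover have "ps c \<noteq> ps d" using ps[OF cA(1)] ps[OF d(1)] d(2) by force
      ultimately have "ps c < ps d" by simp
      then have "prefers tb c d" using prefers_nth[OF assms(1), of "ps c" "ps d"] ps[OF cA(1)] ps[OF d(1)] by simp
      then show ?thesis using True cA by (simp add: beats_def)
    next
      case False
      then show ?thesis using \<open>s d \<le> M\<close> cA by (simp add: beats_def)
    qed
  qed
qed

lemma beats_max_ex1:
  assumes "distinct tb" "finite A" "A \<noteq> {}" "A \<subseteq> set tb"
  shows "\<exists>!c. c \<in> A \<and> (\<forall>d\<in>A. d \<noteq> c \<longrightarrow> beats s tb c d)"
proof -
  obtain c where c: "c \<in> A" "\<forall>d\<in>A. d \<noteq> c \<longrightarrow> beats s tb c d" using beats_max_ex[OF assms, of s] by blast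
  show ?thesis
  proof (rule ex1I[of _ c])
    show "c \<in> A \<and> (\<forall>d\<in>A. d \<noteq> c \<longrightarrow> beats s tb c d)" using c by blast
  next
    fix y assume y: "y \<in> A \<and> (\<forall>d\<in>A. d \<noteq> y \<longrightarrow> beats s tb y d)"
    show "y = c"
    proof (rule ccontr)
      assume "y \<noteq> c"
      then have "beats s tb y c" "beats s tb c y" using y c by auto
      then show False using beats_asym[OF assms(1)] by blast
    qed
  qed
qed

lemma first_cand_prop:
  assumes "m \<ge> 3" "tb \<in> rankings m"
  shows "first_cand m tb P \<in> {1..m} \<and> (\<forall>d\<in>{1..m}. d \<noteq> first_cand m tb P \<longrightarrow> beats (plu (rankings m) P) tb (first_cand m tb P) d)"
  unfolding first_cand_def
  by (rule theI'[OF beats_max_ex1]) (use assms in \<open>auto simp: rank_mem\<close>)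

lemma second_cand_prop:
  assumes "m \<ge> 3" "tb \<in> rankings m"
  shows "second_cand m tb P \<in> {1..m} \<and> second_cand m tb P \<noteq> first_cand m tb P \<and>
     (\<forall>d\<in>{1..m}. d \<noteq> second_cand m tb P \<and> d \<noteq> first_cand m tb P \<longrightarrow> beats (plu (rankings m) P) tb (second_cand m tb P) d)"
proof -
  let ?f = "first_cand m tb P"
  let ?B = "beats (plu (rankings m) P) tb"
  have ne: "{1..m} - {?f} \<noteq> {}"
  proof -
    have "1 \<in> {1..m}" "2 \<in> {1..m}" using assms by auto
    then have "(if ?f = 1 then 2 else 1) \<in> {1..m} - {?f}" by auto
    then show ?thesis by blast
  qed
  have ex: "\<exists>!c. c \<in> {1..m} - {?f} \<and> (\<forall>d\<in>{1..m} - {?f}. d \<noteq> c \<longrightarrow> ?B c d)"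
    by (rule beats_max_ex1) (use assms ne in \<open>auto simp: rank_mem\<close>)
  have eq: "(\<lambda>c. c \<in> {1..m} \<and> c \<noteq> ?f \<and> (\<forall>d\<in>{1..m}. d \<noteq> c \<and> d \<noteq> ?f \<longrightarrow> ?B c d))
      = (\<lambda>c. c \<in> {1..m} - {?f} \<and> (\<forall>d\<in>{1..m} - {?f}. d \<noteq> c \<longrightarrow> ?B c d))"
    by (rule ext) blast
  show ?thesis unfolding second_cand_def eq using theI'[OF ex] by blast
qed

lemma restr_plu:
  assumes "a \<in> {1..m}" "b \<in> {1..m}" "a \<noteq> b"
  shows "plu (permutations_of_set {a,b}) (restr m {a,b} P) a = (\<Sum>p\<in>{p\<in>rankings m. prefers p a b}. P p)"
proof -
  let ?K = "{a,b}"
  let ?g = "filter (\<lambda>x. x \<in> ?K)"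
  have gperm: "?g p \<in> permutations_of_set ?K" if "p \<in> rankings m" for p
    using that assms by (auto simp: rank_mem permutations_of_set_def)
  have "plu (permutations_of_set ?K) (restr m ?K P) a
      = (\<Sum>q\<in>{q\<in>permutations_of_set ?K. hd q = a}. \<Sum>p\<in>{p. p \<in> {p\<in>rankings m. hd (?g p) = a} \<and> ?g p = q}. P p)"
    unfolding plu_def restr_def
  proof (rule sum.cong[OF refl])
    fix q assume "q \<in> {q\<in>permutations_of_set ?K. hd q = a}"
    then have "hd q = a" by simp
    then have "{p\<in>rankings m. ?g p = q} = {p. p \<in> {p\<in>rankings m. hd (?g p) = a} \<and> ?g p = q}" by auto
    then show "(\<Sum>p\<in>{p\<in>rankings m. ?g p = q}. P p) = (\<Sum>p\<in>{p. p \<in> {p\<in>rankings m. hd (?g p) = a} \<and> ?g p = q}. P p)"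
      by simp
  qed
  also have "\<dots> = (\<Sum>p\<in>{p\<in>rankings m. hd (?g p) = a}. P p)"
    by (rule sum.group) (use gperm in auto)
  also have "{p\<in>rankings m. hd (?g p) = a} = {p\<in>rankings m. prefers p a b}"
  proof (intro Collect_cong conj_cong refl)
    fix p assume "p \<in> rankings m"
    then show "(hd (?g p) = a) = prefers p a b" using hd_filter_pair[of p a b] assms by (simp add: rank_mem)
  qed
  finally show ?thesis .
qed

definition SP :: "nat \<Rightarrow> (nat list \<Rightarrow> real) \<Rightarrow> nat \<Rightarrow> nat \<Rightarrow> real" where
  "SP m P a b = (\<Sum>p\<in>{p\<in>rankings m. prefers p a b}. P p)"

lemma trs_struct:
  assumes "m \<ge> 3" "tb \<in> rankings m"
  obtains f g where "f \<in> {1..m}" "g \<in> {1..m}" "f \<noteq> g"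
    "\<forall>d\<in>{1..m}. d \<noteq> f \<longrightarrow> plu (rankings m) P d \<le> plu (rankings m) P f"
    "\<forall>d\<in>{1..m}. d \<noteq> f \<and> d \<noteq> g \<longrightarrow> plu (rankings m) P d \<le> plu (rankings m) P g"
    "trs m tb P = f \<or> trs m tb P = g"
    "SP m P g f < SP m P f g \<Longrightarrow> trs m tb P = f"
    "SP m P f g < SP m P g f \<Longrightarrow> trs m tb P = g"
    "trs m tb P = f \<Longrightarrow> SP m P g f \<le> SP m P f g"
    "trs m tb P = g \<Longrightarrow> SP m P f g \<le> SP m P g f"
proof -
  let ?f = "first_cand m tb P" and ?g = "second_cand m tb P"
  note F = first_cand_prop[OF assms, of P]
  note G = second_cand_prop[OF assms, of P]
  let ?s = "plu (permutations_of_set {?f, ?g}) (restr m {?f, ?g} P)"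
  have sf: "?s ?f = SP m P ?f ?g" unfolding SP_def by (rule restr_plu) (use F G in auto)
  have sg: "?s ?g = SP m P ?g ?f" unfolding SP_def insert_commute[of ?f ?g] by (rule restr_plu) (use F G in auto)
  have trs: "trs m tb P = (if beats ?s tb ?f ?g then ?f else ?g)"
    unfolding trs_def Let_def by simp
  show ?thesis
  proof (rule that[of ?f ?g])
    show "\<forall>d\<in>{1..m}. d \<noteq> ?f \<longrightarrow> plu (rankings m) P d \<le> plu (rankings m) P ?f"
      using F beats_ge by blast
    show "\<forall>d\<in>{1..m}. d \<noteq> ?f \<and> d \<noteq> ?g \<longrightarrow> plu (rankings m) P d \<le> plu (rankings m) P ?g"
      using G beats_ge by blast
    have fne: "?f \<noteq> ?g" using G by simp
    have t1: "trs m tb P = ?f" if "beats ?s tb ?f ?g" using trs that by simp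
    have t2: "trs m tb P = ?g" if "\<not> beats ?s tb ?f ?g" using trs that by simp
    show "SP m P ?g ?f < SP m P ?f ?g \<Longrightarrow> trs m tb P = ?f"
      using t1 beats_gt[of ?s ?g ?f tb] sf sg by simp
    show "SP m P ?f ?g < SP m P ?g ?f \<Longrightarrow> trs m tb P = ?g"
      using t2 beats_ge[of ?s tb ?f ?g] sf sg by fastforce
    show "trs m tb P = ?f \<Longrightarrow> SP m P ?g ?f \<le> SP m P ?f ?g"
      using t2 fne beats_ge[of ?s tb ?f ?g] sf sg by fastforce
    show "trs m tb P = ?g \<Longrightarrow> SP m P ?f ?g \<le> SP m P ?g ?f"
      using t1 fne beats_gt[of ?s ?g ?f tb] sf sg by force
  qed (use F G trs in auto)
qed

declare upt_Suc[simp del]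

abbreviation idr :: "nat \<Rightarrow> nat list" where "idr m \<equiv> [1..<m+1]"

lemma idr_rank: "idr m \<in> rankings m"
  by (auto simp: rank_mem)

lemma idr_hd: "m \<ge> 1 \<Longrightarrow> hd (idr m) = 1"
  by (simp add: upt_conv_Cons del: upt_Suc)

lemma idr_23: "m \<ge> 3 \<Longrightarrow> prefers (idr m) 2 3"
  unfolding prefers_def by (intro exI[of _ 1] exI[of _ 2]) (auto simp del: upt_Suc)

lemma pref_hd_rank: "p \<in> rankings m \<Longrightarrow> m \<ge> 1 \<Longrightarrow> w \<in> {1..m} \<Longrightarrow> w \<noteq> hd p \<Longrightarrow> prefers p (hd p) w"
  by (rule prefers_hd) (auto simp: rank_mem rank_ne)

lemma hat_sum:
  assumes "S \<subseteq> rankings m"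
  shows "(\<Sum>p\<in>S. hatP m \<theta> p) = real (card S) * ((1 - \<theta>) / fact m) + (if idr m \<in> S then \<theta> else 0)"
proof -
  have fin: "finite S" using assms rank_finite finite_subset by blast
  have "(\<Sum>p\<in>S. hatP m \<theta> p) = (\<Sum>p\<in>S. (1 - \<theta>) / fact m + (if p = idr m then \<theta> else 0))"
    by (rule sum.cong[OF refl]) (use assms in \<open>auto simp: hatP_def\<close>)
  also have "\<dots> = real (card S) * ((1 - \<theta>) / fact m) + (if idr m \<in> S then \<theta> else 0)"
    by (simp add: sum.distrib fin sum.delta)
  finally show ?thesis .
qed

lemma card_hd_r: assumes "c \<in> {1..m}" shows "real (card {p\<in>rankings m. hd p = c}) = fact m / m"
proof -
  have "real (m * card {p\<in>rankings m. hd p = c}) = real (fact m)" using card_hd[OF assms] by simp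
  then have "real m * real (card {p\<in>rankings m. hd p = c}) = fact m" by (simp only: of_nat_mult of_nat_fact)
  moreover have "real m > 0" using assms by simp
  ultimately show ?thesis by (simp add: field_simps)
qed

lemma card_pref_r: assumes "a \<in> {1..m}" "b \<in> {1..m}" "a \<noteq> b"
  shows "real (card {p\<in>rankings m. prefers p a b}) = fact m / 2"
proof -
  have "real (2 * card {p\<in>rankings m. prefers p a b}) = real (fact m)" using card_pref[OF assms] by simp
  then have "2 * real (card {p\<in>rankings m. prefers p a b}) = fact m" by (simp only: of_nat_mult of_nat_fact of_nat_numeral)
  then show ?thesis by (simp add: field_simps)
qed

lemma card_hd_pref_r: assumes "a \<in> {1..m}" "b \<in> {1..m}" "x \<in> {1..m}" "a \<noteq> b" "x \<noteq> a" "x \<noteq> b"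
  shows "real (card {p\<in>rankings m. hd p = x \<and> prefers p a b}) = fact m / (2 * m)"
proof -
  have "real (2 * card {p\<in>rankings m. hd p = x \<and> prefers p a b}) = real (card {p\<in>rankings m. hd p = x})"
    using card_hd_pref[OF assms] by simp
  then have "2 * real (card {p\<in>rankings m. hd p = x \<and> prefers p a b}) = fact m / m"
    using card_hd_r[OF assms(3)] by (simp only: of_nat_mult of_nat_numeral)
  then show ?thesis by (simp add: field_simps)
qed

lemma card_last3_r: assumes "a \<in> {1..m}" "b \<in> {1..m}" "c \<in> {1..m}" "a \<noteq> b" "a \<noteq> c" "b \<noteq> c"
  shows "real (card {p\<in>rankings m. prefers p a b \<and> prefers p c b}) = fact m / 3"
proof -
  have "real (3 * card {p\<in>rankings m. prefers p a b \<and> prefers p c b}) = real (fact m)" using card_last3[OF assms] by simp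
  then have "3 * real (card {p\<in>rankings m. prefers p a b \<and> prefers p c b}) = fact m" by (simp only: of_nat_mult of_nat_fact of_nat_numeral)
  then show ?thesis by (simp add: field_simps)
qed

lemma fact_pos: "(fact m :: real) > 0" by simp

lemma hat_plu1: assumes "m \<ge> 1" shows "plu (rankings m) (hatP m \<theta>) 1 = \<theta> + (1 - \<theta>) / m"
proof -
  have "plu (rankings m) (hatP m \<theta>) 1 = real (card {p\<in>rankings m. hd p = 1}) * ((1 - \<theta>) / fact m) + \<theta>"
    unfolding plu_def by (subst hat_sum) (use idr_rank idr_hd assms in auto)
  also have "\<dots> = \<theta> + (1 - \<theta>) / m" using card_hd_r[of 1 m] assms fact_pos[of m] by (simp add: field_simps)
  finally show ?thesis .
qed

lemma hat_plu_c: assumes "c \<in> {1..m}" "c \<noteq> 1" shows "plu (rankings m) (hatP m \<theta>) c = (1 - \<theta>) / m"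
proof -
  have "plu (rankings m) (hatP m \<theta>) c = real (card {p\<in>rankings m. hd p = c}) * ((1 - \<theta>) / fact m)"
    unfolding plu_def by (subst hat_sum) (use idr_rank idr_hd assms in auto)
  also have "\<dots> = (1 - \<theta>) / m" using card_hd_r[of c m] assms fact_pos[of m] by (simp add: field_simps)
  finally show ?thesis .
qed

lemma hat_N: assumes "w \<in> {1..m}" "w \<noteq> 1" shows "SP m (hatP m \<theta>) 1 w = \<theta> + (1 - \<theta>) / 2"
proof -
  have m1: "m \<ge> 1" using assms by auto
  have "prefers (idr m) 1 w" using pref_hd_rank[OF idr_rank m1, of w] idr_hd[OF m1] assms by simp
  then have "SP m (hatP m \<theta>) 1 w = real (card {p\<in>rankings m. prefers p 1 w}) * ((1 - \<theta>) / fact m) + \<theta>"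
    unfolding SP_def by (subst hat_sum) (use idr_rank in auto)
  also have "\<dots> = \<theta> + (1 - \<theta>) / 2" using card_pref_r[of 1 m w] assms fact_pos[of m] by (simp add: field_simps)
  finally show ?thesis .
qed

lemma hat_N': assumes "w \<in> {1..m}" "w \<noteq> 1" shows "SP m (hatP m \<theta>) w 1 = (1 - \<theta>) / 2"
proof -
  have m1: "m \<ge> 1" using assms by auto
  have "prefers (idr m) 1 w" using pref_hd_rank[OF idr_rank m1, of w] idr_hd[OF m1] assms by simp
  then have "\<not> prefers (idr m) w 1" using rank_asym[OF idr_rank] by blast
  then have "SP m (hatP m \<theta>) w 1 = real (card {p\<in>rankings m. prefers p w 1}) * ((1 - \<theta>) / fact m)"
    unfolding SP_def by (subst hat_sum) auto
  also have "\<dots> = (1 - \<theta>) / 2" using card_pref_r[of w m 1] assms fact_pos[of m] by (simp add: field_simps)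
  finally show ?thesis .
qed

definition Zs :: "nat \<Rightarrow> nat \<Rightarrow> nat \<Rightarrow> nat list set" where
  "Zs m w x = {p\<in>rankings m. hd p \<noteq> w \<and> hd p \<noteq> x \<and> prefers p 1 w}"

lemma hat_Z: assumes "w \<in> {1..m}" "x \<in> {1..m}" "w \<noteq> 1" "x \<noteq> 1" "w \<noteq> x"
  shows "(\<Sum>p\<in>Zs m w x. hatP m \<theta> p) = \<theta> + (1 - \<theta>) * (m - 1) / (2 * m)"
proof -
  have m1: "m \<ge> 1" using assms by auto
  let ?Y = "{p\<in>rankings m. hd p = x \<and> prefers p 1 w}"
  have un: "{p\<in>rankings m. prefers p 1 w} = Zs m w x \<union> ?Y"
  proof (intro set_eqI iffI)
    fix p assume p: "p \<in> {p\<in>rankings m. prefers p 1 w}"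
    have "hd p \<noteq> w"
    proof
      assume "hd p = w"
      then have "prefers p w 1" using pref_hd_rank[of p m 1] p assms by auto
      then show False using p rank_asym by blast
    qed
    then show "p \<in> Zs m w x \<union> ?Y" using p unfolding Zs_def by auto
  qed (auto simp: Zs_def)
  have dis: "Zs m w x \<inter> ?Y = {}" unfolding Zs_def by auto
  have fz: "finite (Zs m w x)" unfolding Zs_def by simp
  have "card {p\<in>rankings m. prefers p 1 w} = card (Zs m w x) + card ?Y"
    unfolding un by (rule card_Un_disjoint) (use fz dis in auto)
  then have "real (card (Zs m w x)) = fact m / 2 - fact m / (2 * m)"
    using card_pref_r[of 1 m w] card_hd_pref_r[of 1 m w x] assms by simp
  moreover have "prefers (idr m) 1 w" using pref_hd_rank[OF idr_rank m1, of w] idr_hd[OF m1] assms by simp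
  then have "idr m \<in> Zs m w x" unfolding Zs_def using idr_rank idr_hd[OF m1] assms by auto
  ultimately have "(\<Sum>p\<in>Zs m w x. hatP m \<theta> p) = (fact m / 2 - fact m / (2 * m)) * ((1 - \<theta>) / fact m) + \<theta>"
    by (subst hat_sum) (auto simp: Zs_def)
  also have "\<dots> = \<theta> + (1 - \<theta>) * (m - 1) / (2 * m)" using fact_pos[of m] m1 by (simp add: field_simps)
  finally show ?thesis .
qed

lemma hat_total: "total m (hatP m \<theta>) = 1"
proof -
  have "total m (hatP m \<theta>) = real (card (rankings m)) * ((1 - \<theta>) / fact m) + \<theta>"
    unfolding total_def by (subst hat_sum) (use idr_rank in auto)
  also have "\<dots> = 1" using rank_card[of m] fact_pos[of m] by (simp add: field_simps)
  finally show ?thesis .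
qed

lemma hat_profile: assumes "\<theta> \<le> 1" "0 \<le> \<theta>" shows "is_profile m (hatP m \<theta>)"
  unfolding is_profile_def using hat_total[of m \<theta>] assms by (auto simp: hatP_def)

lemma pert:
  fixes P1 P2 :: "nat list \<Rightarrow> real"
  assumes "\<forall>p\<in>rankings m. \<bar>P1 p - P2 p\<bar> < \<epsilon>" "S \<subseteq> rankings m"
  shows "\<bar>(\<Sum>p\<in>S. P1 p) - (\<Sum>p\<in>S. P2 p)\<bar> \<le> fact m * \<epsilon>"
proof -
  have fin: "finite S" using assms rank_finite finite_subset by blast
  have "\<bar>(\<Sum>p\<in>S. P1 p) - (\<Sum>p\<in>S. P2 p)\<bar> = \<bar>\<Sum>p\<in>S. P1 p - P2 p\<bar>" by (subst sum_subtractf) (rule refl)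
  also have "\<dots> \<le> (\<Sum>p\<in>S. \<bar>P1 p - P2 p\<bar>)" by (rule sum_abs)
  also have "\<dots> \<le> (\<Sum>p\<in>S. \<epsilon>)" by (rule sum_mono) (use assms in \<open>auto intro: less_imp_le\<close>)
  also have "\<dots> = real (card S) * \<epsilon>" by simp
  also have "\<dots> \<le> fact m * \<epsilon>"
  proof (cases "S = {}")
    case True
    have "\<bar>P1 (idr m) - P2 (idr m)\<bar> < \<epsilon>" using assms(1) idr_rank by blast
    then have "\<epsilon> > 0" by linarith
    then show ?thesis using True fact_pos[of m] by simp
  next
    case False
    then obtain p where "p \<in> S" by auto
    then have "\<epsilon> > 0" using assms by force
    moreover have "card S \<le> card (rankings m)" by (rule card_mono) (use assms in auto)
    then have "real (card S) \<le> fact m" using rank_card[of m] by (metis of_nat_fact of_nat_le_iff)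
    ultimately show ?thesis by simp
  qed
  finally show ?thesis .
qed

lemma SP_part: assumes "a \<in> {1..m}" "b \<in> {1..m}" "a \<noteq> b"
  shows "SP m X a b + SP m X b a = total m X"
proof -
  have un: "rankings m = {p\<in>rankings m. prefers p a b} \<union> {p\<in>rankings m. prefers p b a}"
    using rank_total[of _ m a b] assms by auto
  have dis: "{p\<in>rankings m. prefers p a b} \<inter> {p\<in>rankings m. prefers p b a} = {}"
    using rank_asym by auto
  show ?thesis unfolding SP_def total_def
    by (subst (3) un, rule sum.union_disjoint[symmetric]) (use dis in auto)
qed

lemma near_pos: fixes P Q :: "nat list \<Rightarrow> real" shows "\<forall>p\<in>rankings m. \<bar>P p - Q p\<bar> < \<epsilon> \<Longrightarrow> (\<epsilon>::real) > 0"
proof -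
  assume "\<forall>p\<in>rankings m. \<bar>P p - Q p\<bar> < \<epsilon>"
  then have "\<bar>P (idr m) - Q (idr m)\<bar> < \<epsilon>" using idr_rank by blast
  then show ?thesis by linarith
qed

lemma pert_lo: fixes P Q :: "nat list \<Rightarrow> real" shows "\<forall>p\<in>rankings m. \<bar>P p - Q p\<bar> < \<epsilon> \<Longrightarrow> S \<subseteq> rankings m \<Longrightarrow>
   (\<Sum>p\<in>S. Q p) - fact m * \<epsilon> \<le> (\<Sum>p\<in>S. P p)"
  using pert[of m P Q \<epsilon> S] by linarith

lemma pert_hi: fixes P Q :: "nat list \<Rightarrow> real" shows "\<forall>p\<in>rankings m. \<bar>P p - Q p\<bar> < \<epsilon> \<Longrightarrow> S \<subseteq> rankings m \<Longrightarrow>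
   (\<Sum>p\<in>S. P p) \<le> (\<Sum>p\<in>S. Q p) + fact m * \<epsilon>"
  using pert[of m P Q \<epsilon> S] by linarith

lemma SP_lo: fixes P Q :: "nat list \<Rightarrow> real" shows "\<forall>p\<in>rankings m. \<bar>P p - Q p\<bar> < \<epsilon> \<Longrightarrow> SP m Q a b - fact m * \<epsilon> \<le> SP m P a b"
  unfolding SP_def by (rule pert_lo) auto
lemma SP_hi: fixes P Q :: "nat list \<Rightarrow> real" shows "\<forall>p\<in>rankings m. \<bar>P p - Q p\<bar> < \<epsilon> \<Longrightarrow> SP m P a b \<le> SP m Q a b + fact m * \<epsilon>"
  unfolding SP_def by (rule pert_hi) auto
lemma plu_lo: fixes P Q :: "nat list \<Rightarrow> real" shows "\<forall>p\<in>rankings m. \<bar>P p - Q p\<bar> < \<epsilon> \<Longrightarrow> plu (rankings m) Q c - fact m * \<epsilon> \<le> plu (rankings m) P c"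
  unfolding plu_def by (rule pert_lo) auto
lemma plu_hi: fixes P Q :: "nat list \<Rightarrow> real" shows "\<forall>p\<in>rankings m. \<bar>P p - Q p\<bar> < \<epsilon> \<Longrightarrow> plu (rankings m) P c \<le> plu (rankings m) Q c + fact m * \<epsilon>"
  unfolding plu_def by (rule pert_hi) auto
lemma total_hi: fixes P Q :: "nat list \<Rightarrow> real" shows "\<forall>p\<in>rankings m. \<bar>P p - Q p\<bar> < \<epsilon> \<Longrightarrow> total m P \<le> total m Q + fact m * \<epsilon>"
  unfolding total_def by (rule pert_hi) auto
lemma Z_lo: fixes P Q :: "nat list \<Rightarrow> real" shows "\<forall>p\<in>rankings m. \<bar>P p - Q p\<bar> < \<epsilon> \<Longrightarrow> (\<Sum>p\<in>Zs m w x. Q p) - fact m * \<epsilon> \<le> (\<Sum>p\<in>Zs m w x. P p)"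
  by (rule pert_lo) (auto simp: Zs_def)

lemma near_trs:
  assumes m3: "m \<ge> 3" and th: "0 < \<theta>" and tb: "tb \<in> rankings m"
    and near: "\<forall>p\<in>rankings m. \<bar>P p - hatP m \<theta> p\<bar> < \<epsilon>"
    and small: "3 * fact m * \<epsilon> < \<theta>"
  shows "trs m tb P = 1"
proof -
  let ?n = "fact m :: real"
  have m1: "m \<ge> 1" using m3 by simp
  have ne: "?n * \<epsilon> > 0" using near_pos[OF near] by simp
  obtain f g where fg: "f \<in> {1..m}" "g \<in> {1..m}" "f \<noteq> g"
    "\<forall>d\<in>{1..m}. d \<noteq> f \<longrightarrow> plu (rankings m) P d \<le> plu (rankings m) P f"
    "\<forall>d\<in>{1..m}. d \<noteq> f \<and> d \<noteq> g \<longrightarrow> plu (rankings m) P d \<le> plu (rankings m) P g"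
    "trs m tb P = f \<or> trs m tb P = g"
    "SP m P g f < SP m P f g \<Longrightarrow> trs m tb P = f"
    "SP m P f g < SP m P g f \<Longrightarrow> trs m tb P = g"
    "trs m tb P = f \<Longrightarrow> SP m P g f \<le> SP m P f g"
    "trs m tb P = g \<Longrightarrow> SP m P f g \<le> SP m P g f"
    by (rule trs_struct[OF m3 tb, where P = P]) blast
  have pl1: "plu (rankings m) P 1 \<ge> \<theta> + (1 - \<theta>) / m - ?n * \<epsilon>"
    using plu_lo[OF near, of 1] hat_plu1[OF m1, of \<theta>] by linarith
  have plc: "plu (rankings m) P c \<le> (1 - \<theta>) / m + ?n * \<epsilon>" if "c \<in> {1..m}" "c \<noteq> 1" for c
    using plu_hi[OF near, of c] hat_plu_c[OF that, of \<theta>] by linarith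
  have f1: "f = 1"
  proof (rule ccontr)
    assume "f \<noteq> 1"
    then have "plu (rankings m) P 1 \<le> plu (rankings m) P f" using fg(4) m1 by auto
    then show False using pl1 plc[OF fg(1) \<open>f \<noteq> 1\<close>] small ne by linarith
  qed
  have g1: "g \<noteq> 1" using fg f1 by simp
  have "SP m P 1 g \<ge> \<theta> + (1 - \<theta>) / 2 - ?n * \<epsilon>"
    using SP_lo[OF near, of 1 g] hat_N[OF fg(2) g1, of \<theta>] by linarith
  moreover have "SP m P g 1 \<le> (1 - \<theta>) / 2 + ?n * \<epsilon>"
    using SP_hi[OF near, of g 1] hat_N'[OF fg(2) g1, of \<theta>] by linarith
  ultimately have "SP m P g 1 < SP m P 1 g" using small ne by linarith
  then have "SP m P g f < SP m P f g" using f1 by simp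
  then show ?thesis using fg(7) f1 by simp
qed

lemma thr_alg: assumes "m \<ge> 3"
  shows "2 * (\<theta> + (1 - \<theta>) / real m) + (\<theta> + (1 - \<theta>) * real (m - 1) / real (2 * m)) - 1
         = (\<theta> * (5 * real m - 3) - (real m - 3)) / (2 * real m)"
proof -
  have "real (m - 1) = real m - 1" using assms by simp
  then show ?thesis using assms by (simp add: field_simps)
qed

lemma lin_aux: fixes q1 qw qx p1 pz qz T a e b T' :: real
  shows "2*q1 \<le> qw + qx \<Longrightarrow> p1 \<le> q1 \<Longrightarrow> pz \<le> qz \<Longrightarrow> qw+qx+qz \<le> T \<Longrightarrow> a - e \<le> p1 \<Longrightarrow> b - e \<le> pz
   \<Longrightarrow> T = T' \<Longrightarrow> T' \<le> 1 + e \<Longrightarrow> 2*a + b - 1 \<le> 4*e"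
  by linarith

lemma near_noncm:
  assumes m3: "m \<ge> 3" and th: "0 < \<theta>" and tb: "tb \<in> rankings m"
    and near: "\<forall>p\<in>rankings m. \<bar>P p - hatP m \<theta> p\<bar> < \<epsilon>"
    and small: "3 * fact m * \<epsilon> < \<theta>"
    and small2: "4 * fact m * \<epsilon> < (\<theta> * (5 * real m - 3) - (real m - 3)) / (2 * real m)"
  shows "\<not> CM m tb P"
proof
  let ?n = "fact m :: real"
  let ?R = "rankings m"
  have m1: "m \<ge> 1" using m3 by simp
  have ne: "?n * \<epsilon> > 0" using near_pos[OF near] by simp
  have trsP: "trs m tb P = 1" by (rule near_trs[OF m3 th tb near small])
  have small': "3 * (?n * \<epsilon>) < \<theta>" using small by (simp add: mult.assoc)
  have small2': "4 * (?n * \<epsilon>) < (\<theta> * (5 * real m - 3) - (real m - 3)) / (2 * real m)" using small2 by (simp add: mult.assoc)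
  assume "CM m tb P"
  then obtain Q where Q: "is_profile m Q" "total m Q = total m P" "trs m tb Q \<noteq> 1"
    "\<forall>p\<in>?R. Q p < P p \<longrightarrow> prefers p (trs m tb Q) 1"
    unfolding CM_def trsP by blast
  define w where "w = trs m tb Q"
  have Qnn: "\<And>p. 0 \<le> Q p" using Q(1) unfolding is_profile_def by blast
  have mono: "P p \<le> Q p" if "p \<in> ?R" "prefers p 1 w" for p
  proof (rule ccontr)
    assume "\<not> P p \<le> Q p"
    then have "prefers p w 1" using Q(4) that unfolding w_def by auto
    then show False using that rank_asym by blast
  qed
  obtain f g where fg: "f \<in> {1..m}" "g \<in> {1..m}" "f \<noteq> g"
    "\<forall>d\<in>{1..m}. d \<noteq> f \<longrightarrow> plu (rankings m) Q d \<le> plu (rankings m) Q f"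
    "\<forall>d\<in>{1..m}. d \<noteq> f \<and> d \<noteq> g \<longrightarrow> plu (rankings m) Q d \<le> plu (rankings m) Q g"
    "trs m tb Q = f \<or> trs m tb Q = g"
    "SP m Q g f < SP m Q f g \<Longrightarrow> trs m tb Q = f"
    "SP m Q f g < SP m Q g f \<Longrightarrow> trs m tb Q = g"
    "trs m tb Q = f \<Longrightarrow> SP m Q g f \<le> SP m Q f g"
    "trs m tb Q = g \<Longrightarrow> SP m Q f g \<le> SP m Q g f"
    by (rule trs_struct[OF m3 tb, where P = Q]) blast
  have w1: "w \<noteq> 1" using Q(3) w_def by simp
  have wm: "w \<in> {1..m}" using fg w_def by auto
  have totP: "total m P \<le> 1 + ?n * \<epsilon>" using total_hi[OF near] hat_total[of m \<theta>] by linarith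
  show False
  proof (cases "f = 1 \<or> g = 1")
    case True
    then have "SP m Q 1 w \<le> SP m Q w 1" using fg(3,6,9,10) w_def w1 by auto
    moreover have "SP m Q 1 w + SP m Q w 1 = total m Q" by (rule SP_part) (use wm w1 m1 in auto)
    moreover have "SP m P 1 w \<le> SP m Q 1 w" unfolding SP_def by (rule sum_mono) (use mono in auto)
    moreover have "SP m P 1 w \<ge> \<theta> + (1 - \<theta>) / 2 - ?n * \<epsilon>"
      using SP_lo[OF near, of 1 w] hat_N[OF wm w1, of \<theta>] by linarith
    ultimately have "1 + \<theta> - 2 * (?n * \<epsilon>) \<le> 1 + ?n * \<epsilon>" using Q(2) totP by (simp add: field_simps)
    then show False using small' ne by linarith
  next
    case False
    define x where "x = (if w = f then g else f)"
    have x: "x \<in> {1..m}" "x \<noteq> 1" "x \<noteq> w" using False fg w_def x_def by auto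
    have wfg: "w \<noteq> 1" using w1 .
    have "plu ?R Q 1 \<le> plu ?R Q f" "plu ?R Q 1 \<le> plu ?R Q g" using fg(4,5) False m1 by auto
    then have c1: "2 * plu ?R Q 1 \<le> plu ?R Q w + plu ?R Q x" using fg(6) w_def x_def by auto
    have c2: "plu ?R P 1 \<le> plu ?R Q 1" unfolding plu_def
    proof (rule sum_mono)
      fix p assume "p \<in> {p\<in>?R. hd p = 1}"
      then have p: "p \<in> ?R" "hd p = 1" by auto
      then have "prefers p 1 w" using pref_hd_rank[OF p(1) m1 wm] w1 by simp
      then show "P p \<le> Q p" using mono p by blast
    qed
    have c3: "(\<Sum>p\<in>Zs m w x. P p) \<le> (\<Sum>p\<in>Zs m w x. Q p)"
      by (rule sum_mono) (use mono in \<open>auto simp: Zs_def\<close>)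
    have c4: "plu ?R Q w + plu ?R Q x + (\<Sum>p\<in>Zs m w x. Q p) \<le> total m Q"
    proof -
      let ?A = "{p\<in>?R. hd p = w}" and ?B = "{p\<in>?R. hd p = x}"
      have fin: "finite ?A" "finite ?B" "finite (Zs m w x)" by (auto simp: Zs_def)
      have "plu ?R Q w + plu ?R Q x + (\<Sum>p\<in>Zs m w x. Q p) = (\<Sum>p\<in>?A \<union> ?B \<union> Zs m w x. Q p)"
        unfolding plu_def using fin x
        by (subst sum.union_disjoint, auto simp: Zs_def, subst sum.union_disjoint, auto)
      also have "\<dots> \<le> (\<Sum>p\<in>?R. Q p)"
        by (rule sum_mono2) (auto simp: Zs_def Qnn)
      finally show ?thesis unfolding total_def .
    qed
    have c5: "plu ?R P 1 \<ge> \<theta> + (1 - \<theta>) / m - ?n * \<epsilon>"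
      using plu_lo[OF near, of 1] hat_plu1[OF m1, of \<theta>] by linarith
    have c6: "(\<Sum>p\<in>Zs m w x. P p) \<ge> \<theta> + (1 - \<theta>) * real (m - 1) / real (2 * m) - ?n * \<epsilon>"
      using Z_lo[OF near, of w x] hat_Z[OF wm x(1) w1 x(2) x(3)[symmetric], of \<theta>] by linarith
    have "2 * (\<theta> + (1 - \<theta>) / real m) + (\<theta> + (1 - \<theta>) * real (m - 1) / real (2 * m)) - 1 \<le> 4 * (?n * \<epsilon>)"
      by (rule lin_aux[OF c1 c2 c3 c4 c5 c6 Q(2) totP])
    then show False using thr_alg[OF m3, of \<theta>] small2' by linarith
  qed
qed

abbreviation pA :: "nat \<Rightarrow> nat list" where "pA m \<equiv> 2 # [3..<m+1] @ [1]"
abbreviation pB :: "nat \<Rightarrow> nat list" where "pB m \<equiv> [3..<m+1] @ [1, 2]"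

lemma pA_rank: "m \<ge> 3 \<Longrightarrow> pA m \<in> rankings m"
  by (auto simp: rank_mem)

lemma pB_rank: "m \<ge> 3 \<Longrightarrow> pB m \<in> rankings m"
  by (auto simp: rank_mem)

lemma pA_hd: "hd (pA m) = 2" by simp

lemma pB_hd: "m \<ge> 3 \<Longrightarrow> hd (pB m) = 3"
proof -
  assume "m \<ge> 3"
  then have "[3..<m+1] = 3 # [4..<m+1]" by (simp add: upt_conv_Cons)
  then show ?thesis by simp
qed

lemma pA_21: "prefers (pA m) 2 1" by (simp add: prefers_Cons)
lemma pA_23: "m \<ge> 3 \<Longrightarrow> prefers (pA m) 2 3" by (simp add: prefers_Cons)
lemma pB_12: "prefers (pB m) 1 2" by (rule prefers_append) (simp add: prefers_Cons)
lemma pB_32: "m \<ge> 3 \<Longrightarrow> prefers (pB m) 3 2"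
  using pref_hd_rank[OF pB_rank, of m 2] pB_hd[of m] by simp

lemma pB_not21: "m \<ge> 3 \<Longrightarrow> \<not> prefers (pB m) 2 1"
  using pB_12 rank_asym pB_rank by blast

definition cA :: "real \<Rightarrow> real" where "cA \<theta> = (1 - \<theta>) / 2 * (2 * (1 - 2 * \<theta>) / (3 * (1 - \<theta>)))"
definition cB :: "real \<Rightarrow> real" where "cB \<theta> = (1 - \<theta>) / 2 * ((1 + \<theta>) / (3 * (1 - \<theta>)))"

lemma cA_val: "\<theta> < 1 \<Longrightarrow> cA \<theta> = (1 - 2 * \<theta>) / 3" unfolding cA_def by (simp add: field_simps)
lemma cB_val: "\<theta> < 1 \<Longrightarrow> cB \<theta> = (1 + \<theta>) / 6" unfolding cB_def by (simp add: field_simps)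

lemma mQ_eq: "manipQ m \<theta> p = (if prefers p 2 1 then 0 else hatP m \<theta> p) + (if p = pA m then cA \<theta> else 0)
   + (if p = pB m then cB \<theta> else 0)"
  unfolding manipQ_def cA_def cB_def by simp

lemma mQ_sum:
  assumes "S \<subseteq> rankings m"
  shows "(\<Sum>p\<in>S. manipQ m \<theta> p) = (\<Sum>p\<in>{p\<in>S. \<not> prefers p 2 1}. hatP m \<theta> p)
     + (if pA m \<in> S then cA \<theta> else 0) + (if pB m \<in> S then cB \<theta> else 0)"
proof -
  have fin: "finite S" using assms rank_finite finite_subset by blast
  have "(\<Sum>p\<in>S. manipQ m \<theta> p) = (\<Sum>p\<in>S. (if prefers p 2 1 then 0 else hatP m \<theta> p))
     + (\<Sum>p\<in>S. if p = pA m then cA \<theta> else 0) + (\<Sum>p\<in>S. if p = pB m then cB \<theta> else 0)"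
    unfolding mQ_eq by (simp add: sum.distrib)
  also have "(\<Sum>p\<in>S. (if prefers p 2 1 then 0 else hatP m \<theta> p)) = (\<Sum>p\<in>{p\<in>S. \<not> prefers p 2 1}. hatP m \<theta> p)"
    using sum.inter_filter[OF fin, of "hatP m \<theta>" "\<lambda>p. \<not> prefers p 2 1"]
    by (simp add: if_distrib) (rule sum.cong, auto)
  finally show ?thesis using fin by (simp add: sum.delta)
qed

lemma hat_nn: "\<theta> \<le> 1 \<Longrightarrow> 0 \<le> \<theta> \<Longrightarrow> 0 \<le> hatP m \<theta> p"
  by (auto simp: hatP_def)

lemma not21_iff: "p \<in> rankings m \<Longrightarrow> m \<ge> 2 \<Longrightarrow> \<not> prefers p 2 1 \<longleftrightarrow> prefers p 1 2"
proof -
  assume a: "p \<in> rankings m" "m \<ge> 2"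
  have "prefers p 1 2 \<or> prefers p 2 1" by (rule rank_total[OF a(1)]) (use a in auto)
  moreover have "prefers p 1 2 \<Longrightarrow> \<not> prefers p 2 1" by (rule rank_asym[OF a(1)])
  ultimately show ?thesis by blast
qed

lemma set21: "m \<ge> 2 \<Longrightarrow> S \<subseteq> rankings m \<Longrightarrow> {p\<in>S. \<not> prefers p 2 1} = {p\<in>S. prefers p 1 2}"
proof (intro Collect_cong conj_cong refl)
  fix p assume "m \<ge> 2" "S \<subseteq> rankings m" "p \<in> S"
  then show "(\<not> prefers p 2 1) = prefers p 1 2" using not21_iff[of p m] by blast
qed

lemma pA_ne_pB: "m \<ge> 3 \<Longrightarrow> pA m \<noteq> pB m" using pB_hd[of m] by auto

lemma mQ_total: assumes "m \<ge> 3" "\<theta> < 1" shows "total m (manipQ m \<theta>) = 1"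
proof -
  have "{p\<in>rankings m. \<not> prefers p 2 1} = {p\<in>rankings m. prefers p 1 2}" using set21[of m "rankings m"] assms by simp
  then have "total m (manipQ m \<theta>) = SP m (hatP m \<theta>) 1 2 + cA \<theta> + cB \<theta>"
    unfolding total_def SP_def by (subst mQ_sum) (use pA_rank pB_rank assms in auto)
  also have "\<dots> = 1" using hat_N[of 2 m \<theta>] cA_val[OF assms(2)] cB_val[OF assms(2)] assms by (simp add: field_simps)
  finally show ?thesis .
qed

lemma mQ_s1: assumes "m \<ge> 3" shows "plu (rankings m) (manipQ m \<theta>) 1 = \<theta> + (1 - \<theta>) / m"
proof -
  have "{p \<in> {p\<in>rankings m. hd p = 1}. \<not> prefers p 2 1} = {p\<in>rankings m. hd p = 1}"
  proof (intro set_eqI iffI)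
    fix p assume "p \<in> {p\<in>rankings m. hd p = 1}"
    then have "p \<in> rankings m" "hd p = 1" by auto
    then have "prefers p 1 2" using pref_hd_rank[of p m 2] assms by auto
    then show "p \<in> {p \<in> {p\<in>rankings m. hd p = 1}. \<not> prefers p 2 1}" using \<open>p \<in> rankings m\<close> \<open>hd p = 1\<close> rank_asym by blast
  qed auto
  moreover have "pA m \<notin> {p\<in>rankings m. hd p = 1}" "pB m \<notin> {p\<in>rankings m. hd p = 1}" using pB_hd[OF assms] by auto
  ultimately have "plu (rankings m) (manipQ m \<theta>) 1 = plu (rankings m) (hatP m \<theta>) 1"
    unfolding plu_def by (subst mQ_sum) auto
  then show ?thesis using hat_plu1[of m \<theta>] assms by simp
qed

lemma mQ_s2: assumes "m \<ge> 3" shows "plu (rankings m) (manipQ m \<theta>) 2 = cA \<theta>"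
proof -
  let ?X = "{p\<in>rankings m. hd p = 2}"
  have b: "plu (rankings m) (manipQ m \<theta>) 2 = (\<Sum>p\<in>{p\<in>?X. \<not> prefers p 2 1}. hatP m \<theta> p)
     + (if pA m \<in> ?X then cA \<theta> else 0) + (if pB m \<in> ?X then cB \<theta> else 0)"
    unfolding plu_def by (rule mQ_sum) auto
  have e: "{p\<in>?X. \<not> prefers p 2 1} = {}"
  proof (intro set_eqI iffI)
    fix p assume "p \<in> {p\<in>?X. \<not> prefers p 2 1}"
    then have "p \<in> rankings m" "hd p = 2" "\<not> prefers p 2 1" by auto
    then show "p \<in> {}" using pref_hd_rank[of p m 1] assms by auto
  qed auto
  have m1: "pA m \<in> ?X" and m2: "pB m \<notin> ?X" using pB_hd[OF assms] pA_rank[OF assms] by auto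
  have i1: "(if pA m \<in> ?X then cA \<theta> else 0) = cA \<theta>" by (rule if_P[OF m1])
  have i2: "(if pB m \<in> ?X then cB \<theta> else 0) = 0" by (rule if_not_P[OF m2])
  show ?thesis unfolding b e i1 i2 sum.empty by simp
qed

lemma mQ_s3: assumes "m \<ge> 3" shows "plu (rankings m) (manipQ m \<theta>) 3 = (1 - \<theta>) / (2 * m) + cB \<theta>"
proof -
  let ?X = "{p\<in>rankings m. hd p = 3}"
  have b: "plu (rankings m) (manipQ m \<theta>) 3 = (\<Sum>p\<in>{p\<in>?X. \<not> prefers p 2 1}. hatP m \<theta> p)
     + (if pA m \<in> ?X then cA \<theta> else 0) + (if pB m \<in> ?X then cB \<theta> else 0)"
    unfolding plu_def by (rule mQ_sum) auto
  have e: "{p\<in>?X. \<not> prefers p 2 1} = {p\<in>rankings m. hd p = 3 \<and> prefers p 1 2}"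
    using set21[of m ?X] assms by auto
  have m1: "pA m \<notin> ?X" and m2: "pB m \<in> ?X" using pB_hd[OF assms] pB_rank[OF assms] by auto
  have i1: "(if pA m \<in> ?X then cA \<theta> else 0) = 0" by (rule if_not_P[OF m1])
  have i2: "(if pB m \<in> ?X then cB \<theta> else 0) = cB \<theta>" by (rule if_P[OF m2])
  have "plu (rankings m) (manipQ m \<theta>) 3 = (\<Sum>p\<in>{p\<in>rankings m. hd p = 3 \<and> prefers p 1 2}. hatP m \<theta> p) + cB \<theta>"
    unfolding b e i1 i2 by simp
  also have "(\<Sum>p\<in>{p\<in>rankings m. hd p = 3 \<and> prefers p 1 2}. hatP m \<theta> p) = (1 - \<theta>) / (2 * m)"
  proof -
    have "idr m \<notin> {p\<in>rankings m. hd p = 3 \<and> prefers p 1 2}" using idr_hd[of m] assms by auto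
    then have "(\<Sum>p\<in>{p\<in>rankings m. hd p = 3 \<and> prefers p 1 2}. hatP m \<theta> p)
       = real (card {p\<in>rankings m. hd p = 3 \<and> prefers p 1 2}) * ((1 - \<theta>) / fact m)"
      by (subst hat_sum) auto
    also have "\<dots> = (1 - \<theta>) / (2 * m)" using card_hd_pref_r[of 1 m 2 3] assms fact_pos[of m] by (simp add: field_simps)
    finally show ?thesis .
  qed
  finally show ?thesis .
qed

lemma mQ_sk: assumes "m \<ge> 3" "0 \<le> \<theta>" "\<theta> \<le> 1" "k \<in> {1..m}" "k \<noteq> 1" "k \<noteq> 2" "k \<noteq> 3"
  shows "plu (rankings m) (manipQ m \<theta>) k \<le> (1 - \<theta>) / m"
proof -
  have "pA m \<notin> {p\<in>rankings m. hd p = k}" "pB m \<notin> {p\<in>rankings m. hd p = k}" using pB_hd[OF assms(1)] assms by auto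
  then have "plu (rankings m) (manipQ m \<theta>) k = (\<Sum>p\<in>{p \<in> {p\<in>rankings m. hd p = k}. \<not> prefers p 2 1}. hatP m \<theta> p)"
    unfolding plu_def by (subst mQ_sum) auto
  also have "\<dots> \<le> plu (rankings m) (hatP m \<theta>) k"
    unfolding plu_def by (rule sum_mono2) (use hat_nn assms in auto)
  also have "\<dots> = (1 - \<theta>) / m" using hat_plu_c[of k m \<theta>] assms by simp
  finally show ?thesis .
qed

lemma mQ_SP32: assumes "m \<ge> 3" shows "SP m (manipQ m \<theta>) 3 2 = (1 - \<theta>) / 3 + cB \<theta>"
proof -
  let ?X = "{p\<in>rankings m. prefers p 3 2}"
  have b: "SP m (manipQ m \<theta>) 3 2 = (\<Sum>p\<in>{p\<in>?X. \<not> prefers p 2 1}. hatP m \<theta> p)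
     + (if pA m \<in> ?X then cA \<theta> else 0) + (if pB m \<in> ?X then cB \<theta> else 0)"
    unfolding SP_def by (rule mQ_sum) auto
  have e: "{p\<in>?X. \<not> prefers p 2 1} = {p\<in>rankings m. prefers p 1 2 \<and> prefers p 3 2}"
    using set21[of m ?X] assms by auto
  have m1: "pA m \<notin> ?X" using pA_23[OF assms] rank_asym pA_rank[OF assms] by blast
  have m2: "pB m \<in> ?X" using pB_32[OF assms] pB_rank[OF assms] by auto
  have i1: "(if pA m \<in> ?X then cA \<theta> else 0) = 0" by (rule if_not_P[OF m1])
  have i2: "(if pB m \<in> ?X then cB \<theta> else 0) = cB \<theta>" by (rule if_P[OF m2])
  have "SP m (manipQ m \<theta>) 3 2 = (\<Sum>p\<in>{p\<in>rankings m. prefers p 1 2 \<and> prefers p 3 2}. hatP m \<theta> p) + cB \<theta>"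
    unfolding b e i1 i2 by simp
  also have "(\<Sum>p\<in>{p\<in>rankings m. prefers p 1 2 \<and> prefers p 3 2}. hatP m \<theta> p) = (1 - \<theta>) / 3"
  proof -
    have "idr m \<notin> {p\<in>rankings m. prefers p 1 2 \<and> prefers p 3 2}" using idr_23[OF assms] rank_asym idr_rank by blast
    then have "(\<Sum>p\<in>{p\<in>rankings m. prefers p 1 2 \<and> prefers p 3 2}. hatP m \<theta> p)
       = real (card {p\<in>rankings m. prefers p 1 2 \<and> prefers p 3 2}) * ((1 - \<theta>) / fact m)"
      by (subst hat_sum) auto
    also have "\<dots> = (1 - \<theta>) / 3" using card_last3_r[of 1 m 2 3] assms fact_pos[of m] by (simp add: field_simps)
    finally show ?thesis .
  qed
  finally show ?thesis .
qed

lemma thr_key: assumes "m \<ge> 3" "\<theta> < (real m - 3) / (5 * real m - 3)"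
  shows "\<theta> * (5 * real m - 3) < real m - 3"
proof -
  have "5 * real m - 3 > 0" using assms by simp
  then show ?thesis using assms(2) by (simp add: pos_less_divide_eq)
qed

lemma thr_key2: assumes "m \<ge> 3" "\<theta> > (real m - 3) / (5 * real m - 3)"
  shows "\<theta> * (5 * real m - 3) > real m - 3"
proof -
  have "5 * real m - 3 > 0" using assms by simp
  then show ?thesis using assms(2) by (simp add: pos_divide_less_eq)
qed

lemma thr_lt: assumes "m \<ge> 3" "\<theta> < (real m - 3) / (5 * real m - 3)" "0 < \<theta>"
  shows "\<theta> < 1/5"
proof -
  have k: "\<theta> * (5 * real m - 3) < real m - 3" by (rule thr_key[OF assms(1,2)])
  have t1: "\<theta> < 1"
  proof (rule ccontr)
    assume "\<not> \<theta> < 1"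
    then have "1 * (5 * real m - 3) \<le> \<theta> * (5 * real m - 3)" using assms(1) by (intro mult_right_mono) auto
    then have "5 * real m - 3 < real m - 3" using k by simp
    then show False by simp
  qed
  have "5 * (\<theta> * real m) - 3 * \<theta> < real m - 3" using k by (simp add: algebra_simps)
  then have "5 * (\<theta> * real m) < real m" using t1 by linarith
  then show ?thesis using assms(1) by (simp add: field_simps)
qed

lemma ineq1: assumes "m \<ge> 3" "\<theta> * (5 * real m - 3) < real m - 3"
  shows "\<theta> + (1 - \<theta>) / m < (1 - 2 * \<theta>) / 3"
proof -
  have "real m > 0" using assms by simp
  have eq: "(1 - 2 * \<theta>) / 3 - (\<theta> + (1 - \<theta>) / m) = ((real m - 3) - \<theta> * (5 * real m - 3)) / (3 * m)"
    using \<open>real m > 0\<close> by (simp add: field_simps)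
  have "((real m - 3) - \<theta> * (5 * real m - 3)) / (3 * m) > 0" using assms \<open>real m > 0\<close> by (intro divide_pos_pos) auto
  then show ?thesis using eq by linarith
qed

lemma ineq2: assumes "m \<ge> 3" "\<theta> * (5 * real m - 3) < real m - 3"
  shows "\<theta> + (1 - \<theta>) / m < (1 - \<theta>) / (2 * m) + (1 + \<theta>) / 6"
proof -
  have "real m > 0" using assms by simp
  have eq: "(1 - \<theta>) / (2 * m) + (1 + \<theta>) / 6 - (\<theta> + (1 - \<theta>) / m) = ((real m - 3) - \<theta> * (5 * real m - 3)) / (6 * m)"
    using \<open>real m > 0\<close> by (simp add: field_simps)
  have "((real m - 3) - \<theta> * (5 * real m - 3)) / (6 * m) > 0" using assms \<open>real m > 0\<close> by (intro divide_pos_pos) auto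
  then show ?thesis using eq by linarith
qed

lemma mQ_trs:
  assumes m3: "m \<ge> 3" and th: "0 < \<theta>" and thr: "\<theta> < (real m - 3) / (5 * real m - 3)" and tb: "tb \<in> rankings m"
  shows "trs m tb (manipQ m \<theta>) = 2"
proof -
  let ?Q = "manipQ m \<theta>" and ?R = "rankings m"
  have t5: "\<theta> < 1/5" by (rule thr_lt[OF m3 thr th])
  have key: "\<theta> * (5 * real m - 3) < real m - 3" by (rule thr_key[OF m3 thr])
  have s1: "plu ?R ?Q 1 = \<theta> + (1 - \<theta>) / m" by (rule mQ_s1[OF m3])
  have cAv: "cA \<theta> = (1 - 2 * \<theta>) / 3" using cA_val t5 by simp
  have cBv: "cB \<theta> = (1 + \<theta>) / 6" using cB_val t5 by simp
  have s2: "plu ?R ?Q 2 > \<theta> + (1 - \<theta>) / m" using mQ_s2[OF m3, of \<theta>] cAv ineq1[OF m3 key] by linarith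
  have s3: "plu ?R ?Q 3 > \<theta> + (1 - \<theta>) / m" using mQ_s3[OF m3, of \<theta>] cBv ineq2[OF m3 key] by linarith
  have sle: "plu ?R ?Q c \<le> \<theta> + (1 - \<theta>) / m" if "c \<in> {1..m}" "c \<noteq> 2" "c \<noteq> 3" for c
  proof (cases "c = 1")
    case True then show ?thesis using s1 by simp
  next
    case False
    then have "plu ?R ?Q c \<le> (1 - \<theta>) / m" using mQ_sk[OF m3, of \<theta> c] th t5 that by simp
    then show ?thesis using th by simp
  qed
  obtain f g where fg: "f \<in> {1..m}" "g \<in> {1..m}" "f \<noteq> g"
    "\<forall>d\<in>{1..m}. d \<noteq> f \<longrightarrow> plu (rankings m) ?Q d \<le> plu (rankings m) ?Q f"
    "\<forall>d\<in>{1..m}. d \<noteq> f \<and> d \<noteq> g \<longrightarrow> plu (rankings m) ?Q d \<le> plu (rankings m) ?Q g"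
    "trs m tb ?Q = f \<or> trs m tb ?Q = g"
    "SP m ?Q g f < SP m ?Q f g \<Longrightarrow> trs m tb ?Q = f"
    "SP m ?Q f g < SP m ?Q g f \<Longrightarrow> trs m tb ?Q = g"
    "trs m tb ?Q = f \<Longrightarrow> SP m ?Q g f \<le> SP m ?Q f g"
    "trs m tb ?Q = g \<Longrightarrow> SP m ?Q f g \<le> SP m ?Q g f"
    by (rule trs_struct[OF m3 tb, where P = ?Q]) blast
  have m23: "2 \<in> {1..m}" "3 \<in> {1..m}" using m3 by auto
  have f23: "f = 2 \<or> f = 3"
  proof (rule ccontr)
    assume "\<not> (f = 2 \<or> f = 3)"
    then have "plu ?R ?Q 2 \<le> plu ?R ?Q f" "plu ?R ?Q f \<le> \<theta> + (1 - \<theta>) / m" using fg(1,4) m23 sle by auto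
    then show False using s2 by linarith
  qed
  have g23: "g = 2 \<or> g = 3"
  proof (rule ccontr)
    assume ng: "\<not> (g = 2 \<or> g = 3)"
    define d where "d = (if f = 2 then 3 else (2::nat))"
    have d: "d \<in> {1..m}" "d \<noteq> f" "d \<noteq> g" "d = 2 \<or> d = 3" using f23 ng m23 d_def by auto
    then have "plu ?R ?Q d \<le> plu ?R ?Q g" using fg(5) by blast
    moreover have "plu ?R ?Q g \<le> \<theta> + (1 - \<theta>) / m" using sle fg(2) ng by auto
    moreover have "plu ?R ?Q d > \<theta> + (1 - \<theta>) / m" using d(4) s2 s3 by auto
    ultimately show False by linarith
  qed
  have tot: "total m ?Q = 1" using mQ_total[OF m3] t5 by simp
  have sp32: "SP m ?Q 3 2 = (1 - \<theta>) / 3 + (1 + \<theta>) / 6" using mQ_SP32[OF m3, of \<theta>] cB_val[of \<theta>] t5 by simp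
  have "SP m ?Q 2 3 + SP m ?Q 3 2 = total m ?Q" by (rule SP_part) (use m23 in auto)
  then have lt: "SP m ?Q 3 2 < SP m ?Q 2 3" using tot sp32 th by (simp add: field_simps)
  show ?thesis
  proof (cases "f = 2")
    case True
    then have "g = 3" using g23 fg(3) by auto
    then show ?thesis using fg(7) lt True by simp
  next
    case False
    then have "f = 3" "g = 2" using f23 g23 fg(3) by auto
    then show ?thesis using fg(8) lt by simp
  qed
qed

lemma mQ_nn: assumes "0 \<le> \<theta>" "\<theta> < 1/5" shows "0 \<le> manipQ m \<theta> p"
proof -
  have "0 \<le> cA \<theta>" "0 \<le> cB \<theta>" using cA_val[of \<theta>] cB_val[of \<theta>] assms by auto
  moreover have "0 \<le> hatP m \<theta> p" using hat_nn assms by simp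
  ultimately show ?thesis unfolding mQ_eq by simp
qed

lemma mQ_profile: assumes "m \<ge> 3" "0 \<le> \<theta>" "\<theta> < 1/5" shows "is_profile m (manipQ m \<theta>)"
proof -
  have "manipQ m \<theta> p = 0" if "p \<notin> rankings m" for p
  proof -
    have "p \<noteq> pA m" "p \<noteq> pB m" using that pA_rank pB_rank assms by auto
    moreover have "hatP m \<theta> p = 0" using that by (simp add: hatP_def)
    ultimately show ?thesis unfolding mQ_eq by simp
  qed
  then show ?thesis unfolding is_profile_def using mQ_nn[OF assms(2,3)] mQ_total[OF assms(1)] assms by auto
qed

lemma mQ_mono: assumes "0 \<le> \<theta>" "\<theta> < 1/5" "p \<in> rankings m" "manipQ m \<theta> p < hatP m \<theta> p"
  shows "prefers p 2 1"
proof (rule ccontr)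
  assume "\<not> prefers p 2 1"
  moreover have "0 \<le> cA \<theta>" "0 \<le> cB \<theta>" using cA_val[of \<theta>] cB_val[of \<theta>] assms by auto
  ultimately have "hatP m \<theta> p \<le> manipQ m \<theta> p" unfolding mQ_eq by simp
  then show False using assms(4) by simp
qed

theorem mainTheorem8:
  fixes m :: nat and \<theta> :: real and tb :: "nat list"
  assumes "m \<ge> 3" and "0 < \<theta>" and "\<theta> \<le> 1" and "tb \<in> rankings m"
  shows "trs m tb (hatP m \<theta>) = 1
    \<and> (\<theta> > (real m - 3) / (5 * real m - 3) \<longrightarrow>
         \<not> CM m tb (hatP m \<theta>) \<and>
         (\<exists>\<epsilon>>0. \<forall>P. is_profile m P \<and> (\<forall>p\<in>rankings m. \<bar>P p - hatP m \<theta> p\<bar> < \<epsilon>)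
                 \<longrightarrow> \<not> CM m tb P))
    \<and> (\<theta> < (real m - 3) / (5 * real m - 3) \<longrightarrow>
         CM m tb (hatP m \<theta>) \<and>
         is_profile m (manipQ m \<theta>) \<and> total m (manipQ m \<theta>) = total m (hatP m \<theta>) \<and>
         trs m tb (manipQ m \<theta>) = 2 \<and>
         (\<forall>p\<in>rankings m. manipQ m \<theta> p < hatP m \<theta> p \<longrightarrow> prefers p 2 1))"
proof -
  note m3 = assms(1) and th = assms(2) and th1 = assms(3) and tb = assms(4)
  let ?n = "fact m :: real"
  have npos: "?n > 0" by simp
  have trs1: "trs m tb (hatP m \<theta>) = 1"
  proof (rule near_trs[OF m3 th tb, where \<epsilon> = "\<theta> / (6 * ?n)"])
    show "\<forall>p\<in>rankings m. \<bar>hatP m \<theta> p - hatP m \<theta> p\<bar> < \<theta> / (6 * ?n)" using th npos by simp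
    show "3 * ?n * (\<theta> / (6 * ?n)) < \<theta>" using th npos by (simp add: field_simps)
  qed
  have part2: "\<not> CM m tb (hatP m \<theta>) \<and>
         (\<exists>\<epsilon>>0. \<forall>P. is_profile m P \<and> (\<forall>p\<in>rankings m. \<bar>P p - hatP m \<theta> p\<bar> < \<epsilon>)
                 \<longrightarrow> \<not> CM m tb P)" if thr: "\<theta> > (real m - 3) / (5 * real m - 3)"
  proof -
    define \<delta> where "\<delta> = (\<theta> * (5 * real m - 3) - (real m - 3)) / (2 * real m)"
    have dpos: "\<delta> > 0" unfolding \<delta>_def using thr_key2[OF m3 thr] m3 by (intro divide_pos_pos) auto
    define \<epsilon> where "\<epsilon> = min \<theta> \<delta> / (8 * ?n)"
    have epos: "\<epsilon> > 0" unfolding \<epsilon>_def using dpos th npos by simp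
    have ne: "?n * \<epsilon> = min \<theta> \<delta> / 8" unfolding \<epsilon>_def using npos by (simp add: field_simps)
    have mle: "min \<theta> \<delta> \<le> \<theta>" "min \<theta> \<delta> \<le> \<delta>" "min \<theta> \<delta> > 0" using th dpos by auto
    have e3: "3 * ?n * \<epsilon> = 3 * (min \<theta> \<delta> / 8)" "4 * ?n * \<epsilon> = 4 * (min \<theta> \<delta> / 8)"
      using ne by (simp_all only: mult.assoc)
    have s1: "3 * ?n * \<epsilon> < \<theta>" unfolding e3 using mle by linarith
    have s2: "4 * ?n * \<epsilon> < \<delta>" unfolding e3 using mle by linarith
    have nc: "\<not> CM m tb P" if "\<forall>p\<in>rankings m. \<bar>P p - hatP m \<theta> p\<bar> < \<epsilon>" for P
      by (rule near_noncm[OF m3 th tb that s1]) (use s2 in \<open>simp add: \<delta>_def\<close>)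
    have "\<not> CM m tb (hatP m \<theta>)" by (rule nc) (use epos in simp)
    moreover have "\<exists>\<epsilon>>0. \<forall>P. is_profile m P \<and> (\<forall>p\<in>rankings m. \<bar>P p - hatP m \<theta> p\<bar> < \<epsilon>) \<longrightarrow> \<not> CM m tb P"
      using nc epos by blast
    ultimately show ?thesis by blast
  qed
  have part3: "CM m tb (hatP m \<theta>) \<and>
         is_profile m (manipQ m \<theta>) \<and> total m (manipQ m \<theta>) = total m (hatP m \<theta>) \<and>
         trs m tb (manipQ m \<theta>) = 2 \<and>
         (\<forall>p\<in>rankings m. manipQ m \<theta> p < hatP m \<theta> p \<longrightarrow> prefers p 2 1)" if thr: "\<theta> < (real m - 3) / (5 * real m - 3)"
  proof -
    have t5: "\<theta> < 1/5" by (rule thr_lt[OF m3 thr th])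
    have prof: "is_profile m (manipQ m \<theta>)" by (rule mQ_profile[OF m3]) (use th t5 in auto)
    have tot: "total m (manipQ m \<theta>) = total m (hatP m \<theta>)" using mQ_total[OF m3, of \<theta>] hat_total[of m \<theta>] t5 by simp
    have trs2: "trs m tb (manipQ m \<theta>) = 2" by (rule mQ_trs[OF m3 th thr tb])
    have mono: "\<forall>p\<in>rankings m. manipQ m \<theta> p < hatP m \<theta> p \<longrightarrow> prefers p 2 1"
      using mQ_mono[of \<theta>] th t5 by auto
    have "CM m tb (hatP m \<theta>)" unfolding CM_def
      using prof tot trs2 trs1 mono by (intro exI[of _ "manipQ m \<theta>"]) auto
    then show ?thesis using prof tot trs2 mono by blast
  qed
  show ?thesis using trs1 part2 part3 by blast
qed

end
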